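(* For every positive integer $s$ and every integer $j\ge 1$, $$\sum_{i=0}^{j-1}h_{s,i,j}=(-1)^{j+1}(s-1)\binom{s-1}{j-1},$$ where $h_{s,i,j}$ is defined in the context.
   Context: For a fixed positive integer $s$, the numbers $h_{s,i,j}$ (integers $i\ge 0$, $j$) are defined recursively by: $h_{s,i,j}=0$ if $j\le i$; for $i=0$ and $j\ge 1$, $h_{s,0,j}=\binom{s+j-1}{j}\frac{s-j}{s}$; for $i>0$ and $j>i$, $h_{s,i,j}=-\frac{s-j+1}{i}h_{s,i-1,j-1}-\frac{j-i}{i}h_{s,i-1,j}$. *)

theory Defs
  imports Complex_Main
begin

fun h :: "nat \<Rightarrow> nat \<Rightarrow> nat \<Rightarrow> real" where
  "h s 0 j = (if j = 0 then 0
              else real ((s + j - 1) choose j) * (real s - real j) / real s)"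
| "h s (Suc i) j = (if j \<le> Suc i then 0
              else - ((real s - real j + 1) / real (Suc i)) * h s i (j - 1)
                   - ((real j - real (Suc i)) / real (Suc i)) * h s i j)"

end

theory Submission
  imports Defs
begin

lemma h_diag: "j \<le> i \<Longrightarrow> h s i j = 0"
  by (cases i) auto

lemma h_rec:
  assumes "i \<le> n"
  shows "real (Suc i) * h s (Suc i) (Suc n)
     = - (real s - real n) * h s i n - (real n - real i) * h s i (Suc n)"
proof (cases "i = n")
  case True
  then show ?thesis by (simp add: h_diag)
next
  case False
  then have "\<not> Suc n \<le> Suc i" using assms by auto
  then show ?thesis
    by (simp del: of_nat_Suc add: field_simps) (simp add: algebra_simps)
qed

lemma binom_step: "real (Suc n) * real (m choose Suc n) = (real m - real n) * real (m choose n)"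
proof (cases "n \<le> m")
  case True
  have "Suc n * (m choose Suc n) = (m - n) * (m choose n)"
    using binomial_absorption[of n m] binomial_absorb_comp[of m n] by simp
  then have "real (Suc n * (m choose Suc n)) = real ((m - n) * (m choose n))" by simp
  then show ?thesis using True by (simp only: of_nat_mult of_nat_diff)
next
  case False
  then show ?thesis by (simp add: binomial_eq_0)
qed

lemma S_step:
  assumes "n \<ge> 1"
  shows "real n * (\<Sum>i<Suc n. h s i (Suc n)) = - (real s - real n) * (\<Sum>i<n. h s i n)"
proof -
  have "(\<Sum>i<Suc n. real (Suc i) * h s (Suc i) (Suc n))
     = (\<Sum>i<Suc n. - (real s - real n) * h s i n - (real n - real i) * h s i (Suc n))"
    by (intro sum.cong refl h_rec) simp
  also have "\<dots> = - (real s - real n) * (\<Sum>i<Suc n. h s i n)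
      - real n * (\<Sum>i<Suc n. h s i (Suc n)) + (\<Sum>i<Suc n. real i * h s i (Suc n))"
    by (simp add: sum_subtractf sum_distrib_left algebra_simps sum.distrib)
  also have "(\<Sum>i<Suc n. h s i n) = (\<Sum>i<n. h s i n)"
    by (simp add: h_diag)
  finally have A: "(\<Sum>i<Suc n. real (Suc i) * h s (Suc i) (Suc n)) =
      - (real s - real n) * (\<Sum>i<n. h s i n)
      - real n * (\<Sum>i<Suc n. h s i (Suc n)) + (\<Sum>i<Suc n. real i * h s i (Suc n))" .
  have "(\<Sum>i<Suc (Suc n). real i * h s i (Suc n)) = (\<Sum>i<Suc n. real (Suc i) * h s (Suc i) (Suc n))"
    by (subst sum.lessThan_Suc_shift) simp
  moreover have "(\<Sum>i<Suc (Suc n). real i * h s i (Suc n)) = (\<Sum>i<Suc n. real i * h s i (Suc n))"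
    by (simp add: h_diag)
  ultimately show ?thesis using A by linarith
qed

lemma S_closed:
  assumes "s \<ge> 1"
  shows "(\<Sum>i<Suc n. h s i (Suc n)) = (-1) ^ n * (real s - 1) * real ((s - 1) choose n)"
proof (induction n)
  case 0
  then show ?case using assms by (simp add: of_nat_diff)
next
  case (Suc n)
  have st: "real (Suc n) * (\<Sum>i<Suc (Suc n). h s i (Suc (Suc n)))
      = - (real s - real (Suc n)) * (\<Sum>i<Suc n. h s i (Suc n))"
    by (rule S_step) simp
  have b: "real (Suc n) * real ((s - 1) choose Suc n) = (real s - 1 - real n) * real ((s - 1) choose n)"
    using binom_step[of n "s - 1"] assms by (simp add: of_nat_diff)
  have "real (Suc n) * (\<Sum>i<Suc (Suc n). h s i (Suc (Suc n)))
     = real (Suc n) * ((-1) ^ Suc n * (real s - 1) * real ((s - 1) choose Suc n))"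
  proof -
    have "real (Suc n) * ((-1) ^ Suc n * (real s - 1) * real ((s - 1) choose Suc n))
        = (-1) ^ Suc n * (real s - 1) * (real (Suc n) * real ((s - 1) choose Suc n))"
      by (simp only: ac_simps)
    also have "\<dots> = (-1) ^ Suc n * (real s - 1) * ((real s - 1 - real n) * real ((s - 1) choose n))"
      by (simp only: b)
    also have "\<dots> = - (real s - real (Suc n)) * ((-1) ^ n * (real s - 1) * real ((s - 1) choose n))"
      by (simp add: algebra_simps)
    finally show ?thesis unfolding st Suc.IH by simp
  qed
  then have "(\<Sum>i<Suc (Suc n). h s i (Suc (Suc n))) = (-1) ^ Suc n * (real s - 1) * real ((s - 1) choose Suc n)"
    by (rule mult_left_cancel[THEN iffD1, rotated]) simp
  then show ?case by simp
qed

theorem corollary9: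
  fixes s j :: nat
  assumes "s \<ge> 1" and "j \<ge> 1"
  shows "(\<Sum>i = 0..j - 1. h s i j) = (-1) ^ (j + 1) * (real s - 1) * real ((s - 1) choose (j - 1))"
proof -
  obtain n where j: "j = Suc n" using assms(2) by (cases j) auto
  have "{0..j - 1} = {..<Suc n}" using j by auto
  then show ?thesis using S_closed[OF assms(1), of n] j by simp
qed

end
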